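(* Let $K$ be a field of characteristic zero, $R=K[x,y,z]$ with the standard grading, and let $a,b,c,\beta,\gamma$ be integers with $a\geq c\geq 2$, $1\leq \beta\leq b-1$ and $\max\{1,b-a+1\}\leq \gamma\leq \min\{b-1,c-1\}$. Consider the ideal $$I=(x^a,\ y^b-x^{b-\gamma}z^\gamma,\ z^c,\ x^{a-b+\gamma}y^{b-\beta},\ y^{b-\beta}z^{c-\gamma})\subset R.$$ If one of $a,b,c$ is equal to two, then $R/I$ has the weak Lefschetz property.
   Context: A graded Artinian $K$-algebra $A=\bigoplus_i [A]_i$ has the weak Lefschetz property (WLP) if there exists a linear form $L\in[A]_1$ such that the multiplication map $\times L:[A]_i\to[A]_{i+1}$ has maximal rank (i.e. is injective or surjective) for every $i$. *)

theory Defs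
  imports "HOL-Library.Poly_Mapping" "HOL-Library.Product_Plus"
begin

text \<open>The polynomial ring R = K[x,y,z]: finitely supported functions from exponent
triples (i,j,k) (standing for x^i y^j z^k) to K, with convolution product.\<close>

type_synonym 'a poly3 = "(nat \<times> nat \<times> nat) \<Rightarrow>\<^sub>0 'a"

definition mon3 :: "nat \<Rightarrow> nat \<Rightarrow> nat \<Rightarrow> 'a::{zero,one} poly3" where
  "mon3 i j k = Poly_Mapping.single (i, j, k) 1"

definition tdeg :: "nat \<times> nat \<times> nat \<Rightarrow> nat" where
  "tdeg m = (case m of (i, j, k) \<Rightarrow> i + j + k)"

definition homog :: "nat \<Rightarrow> 'a::zero poly3 \<Rightarrow> bool" where
  "homog d f \<longleftrightarrow> (\<forall>m \<in> Poly_Mapping.keys f. tdeg m = d)"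

definition gen_ideal :: "'a::comm_ring_1 poly3 list \<Rightarrow> 'a poly3 set" where
  "gen_ideal gs = {f. \<exists>hs. f = (\<Sum>i<length gs. hs i * gs ! i)}"

text \<open>For a homogeneous ideal I, [R/I]_d = [R]_d / [I]_d with [I]_d = I \<inter> [R]_d.
  Injectivity of \<times>L : [R/I]_d \<rightarrow> [R/I]_(d+1):\<close>
definition mult_inj :: "'a::comm_ring_1 poly3 set \<Rightarrow> 'a poly3 \<Rightarrow> nat \<Rightarrow> bool" where
  "mult_inj I L d \<longleftrightarrow> (\<forall>f. homog d f \<and> L * f \<in> I \<longrightarrow> f \<in> I)"

definition mult_surj :: "'a::comm_ring_1 poly3 set \<Rightarrow> 'a poly3 \<Rightarrow> nat \<Rightarrow> bool" where
  "mult_surj I L d \<longleftrightarrow>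
     (\<forall>g. homog (Suc d) g \<longrightarrow> (\<exists>f. homog d f \<and> g - L * f \<in> I))"

text \<open>Weak Lefschetz property of R/I (I a homogeneous ideal): some linear form L
  (every element of [R/I]_1 is the class of a linear form of R) such that
  \<times>L has maximal rank in every degree.\<close>
definition has_WLP :: "'a::comm_ring_1 poly3 set \<Rightarrow> bool" where
  "has_WLP I \<longleftrightarrow> (\<exists>L. homog 1 L \<and> (\<forall>d. mult_inj I L d \<or> mult_surj I L d))"

end

theory Submission
  imports Defs
begin


lemma poly_expansion:
  "(p::('a \<Rightarrow>\<^sub>0 'b::comm_monoid_add)) = (\<Sum>k\<in>Poly_Mapping.keys p. Poly_Mapping.single k (Poly_Mapping.lookup p k))"
proof (rule poly_mapping_eqI)
  fix x
  show "Poly_Mapping.lookup p x = Poly_Mapping.lookup (\<Sum>k\<in>Poly_Mapping.keys p. Poly_Mapping.single k (Poly_Mapping.lookup p k)) x"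
    by (cases "x \<in> Poly_Mapping.keys p") (auto simp: lookup_sum lookup_single when_def in_keys_iff)
qed

lemma poly_induct_keys:
  fixes p :: "'a \<Rightarrow>\<^sub>0 'b::comm_monoid_add"
  assumes "P 0" "\<And>k. k \<in> Poly_Mapping.keys p \<Longrightarrow> P (Poly_Mapping.single k (Poly_Mapping.lookup p k))"
    "\<And>f g. P f \<Longrightarrow> P g \<Longrightarrow> P (f + g)"
  shows "P p"
proof -
  have "P (\<Sum>k\<in>K. Poly_Mapping.single k (Poly_Mapping.lookup p k))" if "K \<subseteq> Poly_Mapping.keys p" for K
    using finite_subset[OF that finite_keys] that
    by (induction K rule: finite_induct) (auto simp: assms)
  then show ?thesis by (subst poly_expansion) simp
qed

lemma gen_ideal_zero: "0 \<in> gen_ideal gs"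
  unfolding gen_ideal_def by (rule CollectI, rule exI[of _ "\<lambda>_. 0"]) simp

lemma gen_ideal_add: "f \<in> gen_ideal gs \<Longrightarrow> g \<in> gen_ideal gs \<Longrightarrow> f + g \<in> gen_ideal gs"
  unfolding gen_ideal_def
  apply clarify
  subgoal for h1 h2 by (rule exI[of _ "\<lambda>i. h1 i + h2 i"]) (simp add: sum.distrib distrib_right)
  done

lemma gen_ideal_mult: "f \<in> gen_ideal gs \<Longrightarrow> r * f \<in> gen_ideal gs"
  unfolding gen_ideal_def
  apply clarify
  subgoal for h by (rule exI[of _ "\<lambda>i. r * h i"]) (simp add: sum_distrib_left mult.assoc)
  done

lemma gen_ideal_gen: "i < length gs \<Longrightarrow> gs ! i \<in> gen_ideal gs"
proof -
  assume i: "i < length gs"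
  have "(\<Sum>j<length gs. (if j = i then 1 else 0) * gs ! j) = (\<Sum>j<length gs. if j = i then gs ! j else 0)"
    by (rule sum.cong) auto
  also have "\<dots> = gs ! i" using i by simp
  finally show ?thesis unfolding gen_ideal_def by (intro CollectI exI[of _ "\<lambda>j. if j = i then 1 else 0"]) simp
qed

lemma gen_ideal_uminus: "f \<in> gen_ideal gs \<Longrightarrow> - f \<in> gen_ideal gs"
  using gen_ideal_mult[of f gs "-1"] by simp

lemma gen_ideal_diff: "f \<in> gen_ideal gs \<Longrightarrow> g \<in> gen_ideal gs \<Longrightarrow> f - g \<in> gen_ideal gs"
  using gen_ideal_add[of f gs "-g"] gen_ideal_uminus by fastforce

lemma gen_ideal_multgen: "i < length gs \<Longrightarrow> r * gs ! i \<in> gen_ideal gs"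
  by (simp add: gen_ideal_gen gen_ideal_mult)

lemma mon3_mult: "(mon3 i j k :: 'a::comm_ring_1 poly3) * mon3 i' j' k' = mon3 (i+i') (j+j') (k+k')"
  unfolding mon3_def by (simp add: mult_single)

lemma homog_0: "homog d (0::'a::comm_ring_1 poly3)" by (simp add: homog_def)
lemma homog_add: "homog d (f::'a::comm_ring_1 poly3) \<Longrightarrow> homog d g \<Longrightarrow> homog d (f + g)"
  unfolding homog_def using keys_add[of f g] by auto
lemma homog_uminus: "homog d (f::'a::comm_ring_1 poly3) \<Longrightarrow> homog d (- f)"
  unfolding homog_def by (simp add: in_keys_iff)
lemma homog_diff: "homog d (f::'a::comm_ring_1 poly3) \<Longrightarrow> homog d g \<Longrightarrow> homog d (f - g)"
  using homog_add[of d f "-g"] homog_uminus by fastforce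
lemma homog_mult: "homog d f \<Longrightarrow> homog e g \<Longrightarrow> homog (d + e) ((f::'a::comm_ring_1 poly3) * g)"
  unfolding homog_def
proof
  fix m assume H: "\<forall>m\<in>Poly_Mapping.keys f. tdeg m = d" "\<forall>m\<in>Poly_Mapping.keys g. tdeg m = e"
    and "m \<in> Poly_Mapping.keys (f * g)"
  then obtain u v where "m = u + v" "u \<in> Poly_Mapping.keys f" "v \<in> Poly_Mapping.keys g"
    using keys_mult by blast
  moreover have "tdeg u = d" "tdeg v = e" using H \<open>u \<in> _\<close> \<open>v \<in> _\<close> by auto
  ultimately show "tdeg m = d + e" by (cases u, cases v) (simp add: tdeg_def)
qed
lemma homog_single: "tdeg p = d \<Longrightarrow> homog d (Poly_Mapping.single p v)"
  by (simp add: homog_def)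
lemma homog_mon3: "i + j + k = d \<Longrightarrow> homog d (mon3 i j k)"
  by (simp add: mon3_def homog_def tdeg_def)



definition red :: "nat \<Rightarrow> nat \<times> nat \<times> nat \<Rightarrow> nat \<times> nat \<times> nat" where
  "red b p = (case p of (i, j, k) \<Rightarrow> (i + (j div b) * (b - 1), j mod b, k + j div b))"
definition std :: "nat \<Rightarrow> nat \<Rightarrow> nat \<Rightarrow> nat \<Rightarrow> nat \<times> nat \<times> nat \<Rightarrow> bool" where
  "std a b c s p = (case p of (i, j, k) \<Rightarrow> i < a \<and> j < b \<and> k < c \<and> \<not> (s \<le> j \<and> (a - b + 1 \<le> i \<or> c - 1 \<le> k)))"
definition Tm :: "nat \<Rightarrow> nat \<Rightarrow> nat \<Rightarrow> nat \<Rightarrow> nat \<times> nat \<times> nat \<Rightarrow> 'a::comm_ring_1 \<Rightarrow> 'a poly3" where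
  "Tm a b c s p v = (if std a b c s (red b p) then Poly_Mapping.single (red b p) v else 0)"
definition NF :: "nat \<Rightarrow> nat \<Rightarrow> nat \<Rightarrow> nat \<Rightarrow> 'a::comm_ring_1 poly3 \<Rightarrow> 'a poly3" where
  "NF a b c s f = (\<Sum>p\<in>Poly_Mapping.keys f. Tm a b c s p (Poly_Mapping.lookup f p))"

lemma Tm_0: "Tm a b c s p 0 = 0" by (simp add: Tm_def)
lemma Tm_add: "Tm a b c s p (u + v) = Tm a b c s p u + Tm a b c s p v"
  by (simp add: Tm_def single_add)
lemma Tm_scale: "Tm a b c s p v = Poly_Mapping.single 0 v * Tm a b c s p 1"
  by (simp add: Tm_def mult_single)

lemma NF_add: "NF a b c s (f + g) = NF a b c s f + NF a b c s g"
  unfolding NF_def by (rule setsum_keys_plus_distrib) (simp_all add: Tm_0 Tm_add)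
lemma NF_zero: "NF a b c s 0 = 0" by (simp add: NF_def)
lemma NF_uminus: "NF a b c s (- f) = - NF a b c s f"
  using NF_add[of a b c s f "-f"] by (simp add: NF_zero eq_neg_iff_add_eq_0 add.commute)
lemma NF_diff: "NF a b c s (f - g) = NF a b c s f - NF a b c s g"
  using NF_add[of a b c s f "-g"] by (simp add: NF_uminus)
lemma NF_single: "NF a b c s (Poly_Mapping.single p v) = Tm a b c s p v"
  by (cases "v = 0") (simp_all add: NF_def Tm_0)
lemma NF_sum: "NF a b c s (\<Sum>i\<in>A. f i) = (\<Sum>i\<in>A. NF a b c s (f i))"
  by (induction A rule: infinite_finite_induct) (simp_all add: NF_zero NF_add)

lemma NF_kill:
  assumes "\<And>p v. NF a b c s (Poly_Mapping.single p v * g) = 0"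
  shows "NF a b c s (h * g) = 0"
  by (induction h rule: poly_induct_keys) (simp_all add: NF_zero NF_add distrib_right assms)

lemma single_mon3: "Poly_Mapping.single (i, j, k) v * (mon3 i' j' k' :: 'a::comm_ring_1 poly3)
   = Poly_Mapping.single (i + i', j + j', k + k') v"
  unfolding mon3_def by (simp add: mult_single)

lemma divmod_aux:
  fixes t q b :: nat assumes "t < b"
  shows "(t + q * b) div b = q" "(t + q * b) mod b = t"
  using assms by simp_all

lemma divmod_s:
  fixes b s j :: nat assumes "0 < b" "s < b"
  shows "(j + s) div b = (if j mod b + s < b then j div b else j div b + 1)
       \<and> (j + s) mod b = (if j mod b + s < b then j mod b + s else j mod b + s - b)"
proof -
  have e: "j + s = (j mod b + s) + (j div b) * b" using div_mult_mod_eq[of j b] by linarith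
  have jb: "j mod b < b" using assms by simp
  show ?thesis
  proof (cases "j mod b + s < b")
    case True
    show ?thesis using True divmod_aux[OF True, of "j div b"] unfolding e[symmetric] by simp
  next
    case False
    have "(j div b + 1) * b = j div b * b + b" by simp
    then have e2: "j + s = (j mod b + s - b) + (j div b + 1) * b" using e False by linarith
    have lt: "j mod b + s - b < b" using assms jb by linarith
    show ?thesis using False divmod_aux[OF lt, of "j div b + 1"] unfolding e2[symmetric] by simp
  qed
qed



definition G :: "nat \<Rightarrow> nat \<Rightarrow> nat \<Rightarrow> nat \<Rightarrow> 'a::comm_ring_1 poly3 list" where
 "G a b c s = [mon3 a 0 0, mon3 0 b 0 - mon3 (b - 1) 0 1, mon3 0 0 c, mon3 (a - b + 1) s 0, mon3 0 s (c - 1)]"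

lemma K1: "\<not> std a b c s (red b (i + a, j, k))" by (simp add: red_def std_def)
lemma red_eq: "red b (i, j, k) = (i + (j div b) * (b - 1), j mod b, k + j div b)"
  by (simp add: red_def)

lemma K2: assumes "0 < b" shows "red b (i, j + b, k) = red b (i + (b - 1), j, k + 1)"
proof -
  have "(j + b) div b = j div b + 1" "(j + b) mod b = j mod b" using assms by (simp_all add: div_add_self2)
  moreover have "(j div b + 1) * (b - 1) = (b - 1) + (j div b) * (b - 1)" by simp
  ultimately show ?thesis unfolding red_eq by simp
qed
lemma K3: "\<not> std a b c s (red b (i, j, k + c))" by (simp add: red_def std_def)
lemma K4: assumes "0 < s" "s < b" "b \<le> a" shows "\<not> std a b c s (red b (i + (a - b + 1), j + s, k))"
proof (cases "j mod b + s < b")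
  case True
  define X where "X = (j div b) * (b - 1)"
  have "red b (i + (a - b + 1), j + s, k) = (i + (a - b + 1) + X, j mod b + s, k + j div b)"
    using divmod_s[of b s j] assms True unfolding red_eq X_def by simp
  then show ?thesis unfolding std_def by auto
next
  case False
  then have d: "(j + s) div b = j div b + 1" using divmod_s[of b s j] assms by simp
  define X where "X = (j div b + 1) * (b - 1)"
  have X: "X \<ge> b - 1" unfolding X_def by simp
  have "red b (i + (a - b + 1), j + s, k) = (i + (a - b + 1) + X, (j + s) mod b, k + (j + s) div b)"
    unfolding red_eq d X_def ..
  moreover have "a \<le> i + (a - b + 1) + X" using X assms by linarith
  ultimately show ?thesis unfolding std_def by auto
qed
lemma K5: assumes "0 < s" "s < b" "1 \<le> c" shows "\<not> std a b c s (red b (i, j + s, k + (c - 1)))"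
proof (cases "j mod b + s < b")
  case True
  then have "red b (i, j + s, k + (c - 1)) = (i + (j div b) * (b - 1), j mod b + s, k + (c - 1) + j div b)"
    using divmod_s[of b s j] assms unfolding red_eq by simp
  moreover have "c - 1 \<le> k + (c - 1) + j div b" by simp
  ultimately show ?thesis using assms unfolding std_def by auto
next
  case False
  then have "(j + s) div b = j div b + 1" using divmod_s[of b s j] assms by simp
  then have "red b (i, j + s, k + (c - 1)) = (i + (j div b + 1) * (b - 1), (j + s) mod b, k + (c - 1) + (j div b + 1))"
    unfolding red_eq by simp
  then show ?thesis using assms by (simp add: std_def)
qed

lemma NF_G:
  assumes "0 < s" "s < b" "1 \<le> c" "b \<le> a" "n < 5"
  shows "NF a b c s (h * (G a b c s ! n :: 'a::comm_ring_1 poly3)) = 0"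
proof (rule NF_kill)
  fix p :: "nat \<times> nat \<times> nat" and v :: 'a
  obtain i j k where p: "p = (i, j, k)" by (cases p) auto
  have "n = 0 \<or> n = 1 \<or> n = 2 \<or> n = 3 \<or> n = 4" using assms(5) by linarith
  then show "NF a b c s (Poly_Mapping.single p v * G a b c s ! n) = 0"
  proof (elim disjE)
    assume "n = 0" then show ?thesis
      using K1[of a b c s i j k] by (simp add: G_def p single_mon3 NF_single Tm_def)
  next
    assume "n = 1" then show ?thesis
      using K2[of b i j k] assms by (simp add: G_def p single_mon3 NF_single Tm_def right_diff_distrib NF_diff)
  next
    assume "n = 2" then show ?thesis
      using K3[of a b c s i j k] by (simp add: G_def p single_mon3 NF_single Tm_def)
  next
    assume "n = 3" then show ?thesis
      using K4[of s b a c i j k] assms by (simp add: G_def p single_mon3 NF_single Tm_def)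
  next
    assume "n = 4" then show ?thesis
      using K5[of s b c a i j k] assms by (simp add: G_def p single_mon3 NF_single Tm_def)
  qed
qed

lemma NF_ideal:
  assumes "0 < s" "s < b" "1 \<le> c" "b \<le> a" "f \<in> gen_ideal (G a b c s :: 'a::comm_ring_1 poly3 list)"
  shows "NF a b c s f = 0"
proof -
  obtain hs where f: "f = (\<Sum>i<length (G a b c s :: 'a poly3 list). hs i * G a b c s ! i)"
    using assms(5) unfolding gen_ideal_def by blast
  have "length (G a b c s :: 'a poly3 list) = 5" by (simp add: G_def)
  then show ?thesis using f NF_G[OF assms(1-4)] by (auto simp: NF_sum intro!: sum.neutral)
qed



lemma red_step:
  assumes "0 < b"
  shows "Poly_Mapping.single (i, q * b + r, k) 1 - Poly_Mapping.single (i + q * (b - 1), r, k + q) 1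
     \<in> gen_ideal (G a b c s :: 'a::comm_ring_1 poly3 list)"
proof (induction q arbitrary: i k)
  case 0
  then show ?case by (simp add: gen_ideal_zero)
next
  case (Suc q)
  let ?I = "gen_ideal (G a b c s :: 'a poly3 list)"
  have g: "Poly_Mapping.single (i, q * b + r, k) 1 * (mon3 0 b 0 - mon3 (b - 1) 0 1) \<in> ?I"
    using gen_ideal_multgen[of 1 "G a b c s"] by (simp add: G_def)
  have e1: "Poly_Mapping.single (i, q * b + r, k) (1::'a) * (mon3 0 b 0 - mon3 (b - 1) 0 1)
     = Poly_Mapping.single (i, Suc q * b + r, k) 1 - Poly_Mapping.single (i + (b - 1), q * b + r, k + 1) 1"
  proof -
    have "q * b + r + b = Suc q * b + r" by simp
    then show ?thesis unfolding right_diff_distrib single_mon3 by (simp only: add_0_right add_0_left)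
  qed
  have e2: "(i + (b - 1)) + q * (b - 1) = i + Suc q * (b - 1)" "k + 1 + q = k + Suc q" by simp_all
  have "Poly_Mapping.single (i, Suc q * b + r, k) (1::'a) - Poly_Mapping.single (i + Suc q * (b - 1), r, k + Suc q) 1
     = Poly_Mapping.single (i, q * b + r, k) 1 * (mon3 0 b 0 - mon3 (b - 1) 0 1)
       + (Poly_Mapping.single (i + (b - 1), q * b + r, k + 1) 1 - Poly_Mapping.single ((i + (b - 1)) + q * (b - 1), r, k + 1 + q) 1)"
    unfolding e1 e2 by simp
  then show ?case using g Suc.IH[of "i + (b - 1)" "k + 1"] gen_ideal_add by metis
qed

lemma nonstd_in:
  assumes "0 < s" "s < b" "b \<le> a" "1 \<le> c" "r < b" "\<not> std a b c s (i, r, k)"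
  shows "Poly_Mapping.single (i, r, k) 1 \<in> gen_ideal (G a b c s :: 'a::comm_ring_1 poly3 list)"
proof -
  let ?I = "gen_ideal (G a b c s :: 'a poly3 list)"
  have c: "a \<le> i \<or> c \<le> k \<or> (s \<le> r \<and> a - b + 1 \<le> i) \<or> (s \<le> r \<and> c - 1 \<le> k)"
    using assms by (auto simp: std_def)
  then show ?thesis
  proof (elim disjE conjE)
    assume h: "a \<le> i"
    have "Poly_Mapping.single (i - a, r, k) 1 * G a b c s ! 0 \<in> ?I" by (rule gen_ideal_multgen) (simp add: G_def)
    then show ?thesis using h by (simp add: G_def single_mon3)
  next
    assume h: "c \<le> k"
    have "Poly_Mapping.single (i, r, k - c) 1 * G a b c s ! 2 \<in> ?I" by (rule gen_ideal_multgen) (simp add: G_def)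
    then show ?thesis using h by (simp add: G_def single_mon3)
  next
    assume h: "s \<le> r" "a - b + 1 \<le> i"
    have "Poly_Mapping.single (i - (a - b + 1), r - s, k) 1 * G a b c s ! 3 \<in> ?I" by (rule gen_ideal_multgen) (simp add: G_def)
    then show ?thesis using h by (simp add: G_def single_mon3)
  next
    assume h: "s \<le> r" "c - 1 \<le> k"
    have "Poly_Mapping.single (i, r - s, k - (c - 1)) 1 * G a b c s ! 4 \<in> ?I" by (rule gen_ideal_multgen) (simp add: G_def)
    then show ?thesis using h by (simp add: G_def single_mon3)
  qed
qed

lemma rep_mon:
  assumes "0 < s" "s < b" "b \<le> a" "1 \<le> c"
  shows "Poly_Mapping.single p 1 - Tm a b c s p 1 \<in> gen_ideal (G a b c s :: 'a::comm_ring_1 poly3 list)"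
proof -
  let ?I = "gen_ideal (G a b c s :: 'a poly3 list)"
  obtain i j k where p: "p = (i, j, k)" by (cases p) auto
  have b: "0 < b" using assms by simp
  have j: "j = (j div b) * b + j mod b" by simp
  have st: "Poly_Mapping.single p (1::'a) - Poly_Mapping.single (red b p) 1 \<in> ?I"
    using red_step[OF b, of i "j div b" "j mod b" k a c s] unfolding p red_eq by (simp flip: j)
  show ?thesis
  proof (cases "std a b c s (red b p)")
    case True
    then show ?thesis using st by (simp add: Tm_def)
  next
    case False
    have "Poly_Mapping.single (red b p) (1::'a) \<in> ?I"
      using nonstd_in[OF assms, of "j mod b" "i + (j div b) * (b - 1)" "k + j div b"] False b
      unfolding p red_eq by simp
    then have "(Poly_Mapping.single p (1::'a) - Poly_Mapping.single (red b p) 1) + Poly_Mapping.single (red b p) 1 \<in> ?I"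
      using st gen_ideal_add by blast
    then show ?thesis using False by (simp add: Tm_def)
  qed
qed

lemma NF_rep:
  assumes "0 < s" "s < b" "b \<le> a" "1 \<le> c"
  shows "f - NF a b c s f \<in> gen_ideal (G a b c s :: 'a::comm_ring_1 poly3 list)"
proof (induction f rule: poly_induct_keys)
  case 1
  then show ?case by (simp add: NF_zero gen_ideal_zero)
next
  case (2 p)
  let ?v = "Poly_Mapping.lookup f p"
  have "Poly_Mapping.single p ?v - NF a b c s (Poly_Mapping.single p ?v)
      = Poly_Mapping.single 0 ?v * (Poly_Mapping.single p 1 - Tm a b c s p 1)"
    by (simp add: NF_single right_diff_distrib mult_single flip: Tm_scale)
  then show ?case using gen_ideal_mult[OF rep_mon[OF assms]] by metis
next
  case (3 f g)
  have "(f + g) - NF a b c s (f + g) = (f - NF a b c s f) + (g - NF a b c s g)"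
    by (simp add: NF_add)
  then show ?case using 3 gen_ideal_add by metis
qed



lemma tdeg_red: assumes "0 < b" shows "tdeg (red b p) = tdeg p"
proof -
  obtain i j k where p: "p = (i, j, k)" by (cases p) auto
  have "(j div b) * (b - 1) + j div b = (j div b) * b" using assms by (cases b) simp_all
  moreover have "tdeg (red b p) = i + (j div b) * (b - 1) + j mod b + (k + j div b)" by (simp add: p red_eq tdeg_def)
  moreover have "tdeg p = i + j + k" by (simp add: p tdeg_def)
  ultimately show ?thesis using div_mult_mod_eq[of j b] by linarith
qed

lemma red_std: "std a b c s p \<Longrightarrow> red b p = p"
  by (cases p) (simp add: std_def red_eq)

lemma keys_NF:
  assumes "0 < b" "n \<in> Poly_Mapping.keys (NF a b c s (f::'a::comm_ring_1 poly3))"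
  shows "\<exists>p\<in>Poly_Mapping.keys f. n = red b p \<and> std a b c s n"
proof -
  have "n \<in> (\<Union>p\<in>Poly_Mapping.keys f. Poly_Mapping.keys (Tm a b c s p (Poly_Mapping.lookup f p)))"
    using subsetD[OF keys_sum assms(2)[unfolded NF_def]] .
  then obtain p where p: "p \<in> Poly_Mapping.keys f" "n \<in> Poly_Mapping.keys (Tm a b c s p (Poly_Mapping.lookup f p))"
    by (rule UN_E)
  then show ?thesis by (auto simp: Tm_def split: if_splits)
qed

lemma NF_homog:
  assumes "0 < b" "homog d f"
  shows "homog d (NF a b c s (f::'a::comm_ring_1 poly3))"
  unfolding homog_def
proof
  fix n assume "n \<in> Poly_Mapping.keys (NF a b c s f)"
  then obtain p where "p \<in> Poly_Mapping.keys f" "n = red b p" using keys_NF[OF assms(1)] by blast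
  then show "tdeg n = d" using assms tdeg_red unfolding homog_def by metis
qed

lemma NF_single_L:
  "NF a b c s (Poly_Mapping.single p v * (mon3 1 0 0 + mon3 0 1 0 :: 'a::comm_ring_1 poly3))
    = Tm a b c s (p + (1, 0, 0)) v + Tm a b c s (p + (0, 1, 0)) v"
  by (cases p) (simp add: distrib_left single_mon3 NF_add NF_single)

lemma inj_part:
  fixes f :: "'a::comm_ring_1 poly3"
  assumes par: "0 < s" "s < b" "b \<le> a" "1 \<le> c" and dd: "d + b < a + s"
    and hf: "homog d f" and Lf: "(mon3 1 0 0 + mon3 0 1 0) * f \<in> gen_ideal (G a b c s)"
  shows "f \<in> gen_ideal (G a b c s)"
proof -
  let ?I = "gen_ideal (G a b c s :: 'a poly3 list)"
  let ?L = "mon3 1 0 0 + mon3 0 1 0 :: 'a poly3"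
  have b: "0 < b" using par by simp
  define g where "g = NF a b c s f"
  have fg: "f - g \<in> ?I" unfolding g_def by (rule NF_rep[OF par])
  have "?L * f - ?L * (f - g) \<in> ?I" using Lf fg gen_ideal_mult gen_ideal_diff by blast
  then have "g * ?L \<in> ?I" by (simp add: algebra_simps)
  then have NFz: "NF a b c s (g * ?L) = 0" using NF_ideal[OF par(1,2,4,3)] by blast
  have hg: "homog d g" unfolding g_def by (rule NF_homog[OF b hf])
  have sg: "\<And>n. n \<in> Poly_Mapping.keys g \<Longrightarrow> std a b c s n"
    unfolding g_def using keys_NF[OF b] by blast
  have "g = 0"
  proof (rule ccontr)
    assume "g \<noteq> 0"
    have "Poly_Mapping.keys g \<noteq> {}"
    proof
      assume e: "Poly_Mapping.keys g = {}"
      have "g = 0"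
        by (rule poly_mapping_eqI) (simp add: e flip: not_in_keys_iff_lookup_eq_zero)
      then show False using \<open>g \<noteq> 0\<close> by simp
    qed
    then obtain m0 where "m0 \<in> Poly_Mapping.keys g" by blast
    define \<phi> where "\<phi> = (\<lambda>(i::nat, j::nat, k::nat). k * (d + 1) + (d - i))"
    obtain m where m: "m \<in> Poly_Mapping.keys g" and mmin: "\<And>p. p \<in> Poly_Mapping.keys g \<Longrightarrow> \<phi> m \<le> \<phi> p"
      using ex_has_least_nat[of "\<lambda>p. p \<in> Poly_Mapping.keys g" m0 \<phi>] \<open>m0 \<in> _\<close> by blast
    obtain i j k where mijk: "m = (i, j, k)" by (cases m) auto
    have degm: "i + j + k = d" using hg m unfolding homog_def mijk tdeg_def by auto
    have stdm: "std a b c s m" using sg m by blast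
    have stdm1: "std a b c s (i + 1, j, k)"
      using stdm dd degm par unfolding mijk std_def by auto
    define n0 where "n0 = (i + 1, j, k)"
    have X: "Poly_Mapping.lookup (Tm a b c s (p + (1, 0, 0)) (Poly_Mapping.lookup g p)) n0
             = (if p = m then Poly_Mapping.lookup g m else 0)" if p: "p \<in> Poly_Mapping.keys g" for p
    proof -
      obtain i' j' k' where pijk: "p = (i', j', k')" by (cases p) auto
      have "j' < b" using sg[OF p] unfolding pijk std_def by simp
      then have r: "red b (p + (1, 0, 0)) = (i' + 1, j', k')" unfolding pijk by (simp add: red_eq)
      show ?thesis
      proof (cases "p = m")
        case True
        then show ?thesis using r stdm1 unfolding Tm_def n0_def mijk pijk by simp
      next
        case False
        then have "(i' + 1, j', k') \<noteq> n0" unfolding n0_def mijk pijk by simp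
        then show ?thesis using r False unfolding Tm_def by (simp add: lookup_single)
      qed
    qed
    have Y: "Poly_Mapping.lookup (Tm a b c s (p + (0, 1, 0)) (Poly_Mapping.lookup g p)) n0 = 0"
      if p: "p \<in> Poly_Mapping.keys g" for p
    proof -
      obtain i' j' k' where pijk: "p = (i', j', k')" by (cases p) auto
      have jb: "j' < b" using sg[OF p] unfolding pijk std_def by simp
      have degp: "i' + j' + k' = d" using hg p unfolding homog_def pijk tdeg_def by auto
      have "red b (p + (0, 1, 0)) \<noteq> n0"
      proof
        assume eq: "red b (p + (0, 1, 0)) = n0"
        show False
        proof (cases "j' + 1 < b")
          case True
          then have "red b (p + (0, 1, 0)) = (i', j' + 1, k')" unfolding pijk by (simp add: red_eq)
          then have "i' = i + 1" "k' = k" using eq unfolding n0_def by auto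
          then have "\<phi> p < \<phi> m" using degp unfolding \<phi>_def pijk mijk by auto
          then show False using mmin[OF p] by simp
        next
          case False
          then have "j' + 1 = b" using jb by simp
          then have "red b (p + (0, 1, 0)) = (i' + (b - 1), 0, k' + 1)" unfolding pijk using b by (simp add: red_eq)
          then have "k = k' + 1" using eq unfolding n0_def by auto
          then have "\<phi> p < \<phi> m" using degp unfolding \<phi>_def pijk mijk by auto
          then show False using mmin[OF p] by simp
        qed
      qed
      then show ?thesis unfolding Tm_def by (simp add: lookup_single)
    qed
    have "g * ?L = (\<Sum>p\<in>Poly_Mapping.keys g. Poly_Mapping.single p (Poly_Mapping.lookup g p) * ?L)"
      by (subst poly_expansion[of g]) (simp add: sum_distrib_right)
    then have "NF a b c s (g * ?L) = (\<Sum>p\<in>Poly_Mapping.keys g.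
        Tm a b c s (p + (1, 0, 0)) (Poly_Mapping.lookup g p) + Tm a b c s (p + (0, 1, 0)) (Poly_Mapping.lookup g p))"
      by (simp only: NF_sum NF_single_L)
    then have "Poly_Mapping.lookup (NF a b c s (g * ?L)) n0
       = (\<Sum>p\<in>Poly_Mapping.keys g. Poly_Mapping.lookup (Tm a b c s (p + (1, 0, 0)) (Poly_Mapping.lookup g p)) n0
            + Poly_Mapping.lookup (Tm a b c s (p + (0, 1, 0)) (Poly_Mapping.lookup g p)) n0)"
      by (simp only: lookup_sum lookup_add)
    also have "\<dots> = (\<Sum>p\<in>Poly_Mapping.keys g. (if p = m then Poly_Mapping.lookup g m else 0))"
      apply (rule sum.cong[OF refl])
      subgoal for p using X[of p] Y[of p] by simp
      done
    also have "\<dots> = Poly_Mapping.lookup g m" using m by simp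
    finally have "Poly_Mapping.lookup g m = 0" using NFz by simp
    then show False using m by (simp add: in_keys_iff)
  qed
  then show ?thesis using fg by simp
qed



abbreviation LL :: "'a::comm_ring_1 poly3" where "LL \<equiv> mon3 1 0 0 + mon3 0 1 0"

definition Q :: "'a::comm_ring_1 poly3 list \<Rightarrow> nat \<Rightarrow> 'a poly3 \<Rightarrow> bool" where
  "Q gs d g \<longleftrightarrow> (\<exists>f. homog d f \<and> g - LL * f \<in> gen_ideal gs)"

lemma Q_I: "g \<in> gen_ideal gs \<Longrightarrow> Q gs d g"
  unfolding Q_def by (intro exI[of _ 0]) (simp add: homog_0)

lemma Q_add: "Q gs d g1 \<Longrightarrow> Q gs d g2 \<Longrightarrow> Q gs d (g1 + g2)"
  unfolding Q_def
proof (elim exE conjE)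
  fix f1 f2 assume h: "homog d f1" "g1 - LL * f1 \<in> gen_ideal gs" "homog d f2" "g2 - LL * f2 \<in> gen_ideal gs"
  have "g1 + g2 - LL * (f1 + f2) = (g1 - LL * f1) + (g2 - LL * f2)" by (simp add: algebra_simps)
  then show "\<exists>f. homog d f \<and> g1 + g2 - LL * f \<in> gen_ideal gs"
    using h gen_ideal_add homog_add by metis
qed

lemma Q_equiv: "g - g' \<in> gen_ideal gs \<Longrightarrow> Q gs d g' \<Longrightarrow> Q gs d g"
  unfolding Q_def
proof (elim exE conjE)
  fix f assume h: "g - g' \<in> gen_ideal gs" "homog d f" "g' - LL * f \<in> gen_ideal gs"
  have "g - LL * f = (g - g') + (g' - LL * f)" by simp
  then show "\<exists>f. homog d f \<and> g - LL * f \<in> gen_ideal gs" using h gen_ideal_add by metis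
qed

lemma Q_scale: "Q gs d g \<Longrightarrow> Q gs d (Poly_Mapping.single 0 v * g)"
  unfolding Q_def
proof (elim exE conjE)
  fix f assume h: "homog d f" "g - LL * f \<in> gen_ideal gs"
  have "homog (0 + d) (Poly_Mapping.single 0 v * f)"
    by (rule homog_mult[OF homog_single h(1)]) (simp add: tdeg_def zero_prod_def)
  moreover have "Poly_Mapping.single 0 v * g - LL * (Poly_Mapping.single 0 v * f) = Poly_Mapping.single 0 v * (g - LL * f)"
    by (simp add: algebra_simps)
  ultimately show "\<exists>f. homog d f \<and> Poly_Mapping.single 0 v * g - LL * f \<in> gen_ideal gs"
    using h gen_ideal_mult by fastforce
qed

lemma Q_flip: "homog d m \<Longrightarrow> Q gs d g \<Longrightarrow> Q gs d (LL * m - g)"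
  unfolding Q_def
proof (elim exE conjE)
  fix f assume h: "homog d m" "homog d f" "g - LL * f \<in> gen_ideal gs"
  have "LL * m - g - LL * (m - f) = - (g - LL * f)" by (simp add: algebra_simps)
  then show "\<exists>f. homog d f \<and> LL * m - g - LL * f \<in> gen_ideal gs"
    using h gen_ideal_uminus homog_diff by metis
qed

lemma L_mon3: "LL * mon3 i j k = (mon3 (i + 1) j k + mon3 i (j + 1) k :: 'a::comm_ring_1 poly3)"
  by (simp add: distrib_right mon3_mult)

lemma Q_shift:
  "i + j + t + k = d + 1 \<Longrightarrow> Q gs d (mon3 i (j + t) k) \<longleftrightarrow> Q gs d (mon3 (i + t) j k)"
proof (induction t arbitrary: i)
  case 0
  then show ?case by simp
next
  case (Suc t)
  have hm: "homog d (mon3 i (j + t) k :: 'a poly3)" using Suc.prems by (intro homog_mon3) simp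
  have e1: "mon3 i (j + Suc t) k = LL * mon3 i (j + t) k - (mon3 (i + 1) (j + t) k :: 'a poly3)"
    unfolding L_mon3 by simp
  have e2: "mon3 (i + 1) (j + t) k = LL * mon3 i (j + t) k - (mon3 i (j + Suc t) k :: 'a poly3)"
    unfolding L_mon3 by simp
  have "Q gs d (mon3 i (j + Suc t) k) \<longleftrightarrow> Q gs d (mon3 (i + 1) (j + t) k)"
  proof
    assume "Q gs d (mon3 i (j + Suc t) k)"
    from Q_flip[OF hm this] show "Q gs d (mon3 (i + 1) (j + t) k)" by (subst e2)
  next
    assume "Q gs d (mon3 (i + 1) (j + t) k)"
    from Q_flip[OF hm this] show "Q gs d (mon3 i (j + Suc t) k)" by (subst e1)
  qed
  also have "\<dots> \<longleftrightarrow> Q gs d (mon3 (i + 1 + t) j k)" using Suc.IH[of "i + 1"] Suc.prems by simp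
  finally show ?case by simp
qed

lemma mon3_in_G:
  assumes "n < 5" "G a b c s ! n = g"
  shows "mon3 i j k * g \<in> gen_ideal (G a b c s :: 'a::comm_ring_1 poly3 list)"
proof -
  have l: "n < length (G a b c s :: 'a poly3 list)" using assms(1) by (simp add: G_def)
  show ?thesis using gen_ideal_multgen[OF l, of "mon3 i j k"] assms(2) by simp
qed

lemma surj_c2:
  assumes par: "0 < s" "s < b" "b \<le> a" "c = 2" and dd: "a + s \<le> d + b" and deg: "i + j + k = d + 1"
  shows "Q (G a b c s) d (mon3 i j k :: 'a::comm_ring_1 poly3)"
proof -
  let ?G = "G a b c s :: 'a poly3 list"
  have base: "Q ?G d (mon3 i j k)" if "Q ?G d (mon3 (i + j) 0 k)"
    using Q_shift[of i 0 j k d ?G] deg that by simp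
  consider "k \<ge> 2" | "k = 1" | "k = 0" by linarith
  then show ?thesis
  proof cases
    case 1
    have "mon3 i j (k - 2) * mon3 0 0 c \<in> gen_ideal ?G" by (rule mon3_in_G[of 2]) (simp_all add: G_def)
    moreover have e: "k - 2 + 2 = k" using 1 by simp
    moreover have "mon3 i j (k - 2) * mon3 0 0 c = (mon3 i j k :: 'a poly3)"
      by (simp only: mon3_mult add_0_right add_0_left par(4) e)
    ultimately show ?thesis using Q_I by metis
  next
    case 2
    have "mon3 (i + j - s) 0 0 * mon3 0 s (c - 1) \<in> gen_ideal ?G" by (rule mon3_in_G[of 4]) (simp_all add: G_def)
    moreover have "mon3 (i + j - s) 0 0 * mon3 0 s (c - 1) = (mon3 (i + j - s) (0 + s) 1 :: 'a poly3)"
      using par by (simp add: mon3_mult)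
    ultimately have "Q ?G d (mon3 (i + j - s) (0 + s) 1)" using Q_I by metis
    moreover have "i + j - s + s = i + j" using dd deg 2 par by linarith
    ultimately have "Q ?G d (mon3 (i + j) 0 1)"
      using Q_shift[of "i + j - s" 0 s 1 d ?G] deg 2 by simp
    then show ?thesis using base 2 by simp
  next
    case 3
    have "mon3 (i + j - s - (a - b + 1)) 0 0 * mon3 (a - b + 1) s 0 \<in> gen_ideal ?G"
      by (rule mon3_in_G[of 3]) (simp_all add: G_def)
    moreover have e3: "i + j - s - (a - b + 1) + (a - b + 1) = i + j - s" using dd deg 3 par by linarith
    then have "mon3 (i + j - s - (a - b + 1)) 0 0 * mon3 (a - b + 1) s 0 = (mon3 (i + j - s) (0 + s) 0 :: 'a poly3)"
      by (simp only: mon3_mult add_0_right add_0_left e3)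
    ultimately have "Q ?G d (mon3 (i + j - s) (0 + s) 0)" using Q_I by metis
    moreover have "i + j - s + s = i + j" using dd deg 3 par by linarith
    ultimately have "Q ?G d (mon3 (i + j) 0 0)"
      using Q_shift[of "i + j - s" 0 s 0 d ?G] deg 3 by simp
    then show ?thesis using base 3 by simp
  qed
qed

lemma surj_b2_aux:
  assumes par: "b = 2" "s = 1" "c \<le> a" "a \<le> d + 1"
  shows "n + k = d + 1 \<Longrightarrow> Q (G a b c s) d (mon3 n 0 k :: 'a::comm_ring_1 poly3)"
proof (induction k arbitrary: n)
  case 0
  let ?G = "G a b c s :: 'a poly3 list"
  have "mon3 (n - a) 0 0 * mon3 a 0 0 \<in> gen_ideal ?G" by (rule mon3_in_G[of 0]) (simp_all add: G_def)
  moreover have "n - a + a = n" using 0 par by linarith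
  then have "mon3 (n - a) 0 0 * mon3 a 0 0 = (mon3 n 0 0 :: 'a poly3)" by (simp add: mon3_mult)
  ultimately show ?case using Q_I by metis
next
  case (Suc k)
  let ?G = "G a b c s :: 'a poly3 list"
  show ?case
  proof (cases n)
    case 0
    have "mon3 0 0 (Suc k - c) * mon3 0 0 c \<in> gen_ideal ?G" by (rule mon3_in_G[of 2]) (simp_all add: G_def)
    moreover have "Suc k - c + c = Suc k" using Suc.prems 0 par by linarith
    then have "mon3 0 0 (Suc k - c) * mon3 0 0 c = (mon3 n 0 (Suc k) :: 'a poly3)" using 0 by (simp add: mon3_mult)
    ultimately show ?thesis using Q_I by metis
  next
    case (Suc n')
    have "mon3 n' 0 k * (mon3 0 b 0 - mon3 (b - 1) 0 1) \<in> gen_ideal ?G"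
      by (rule mon3_in_G[of 1]) (simp_all add: G_def)
    then have "- (mon3 n' 0 k * (mon3 0 b 0 - mon3 (b - 1) 0 1)) \<in> gen_ideal ?G"
      by (rule gen_ideal_uminus)
    moreover have "- (mon3 n' 0 k * (mon3 0 b 0 - mon3 (b - 1) 0 1)) = mon3 n 0 (Suc k) - (mon3 n' 2 k :: 'a poly3)"
      using Suc par by (simp add: right_diff_distrib mon3_mult numeral_2_eq_2)
    moreover have "Q ?G d (mon3 n' (0 + 2) k)"
      using Q_shift[where 'a='a, of n' 0 2 k d ?G] Suc.IH[of "n' + 2"] Suc.prems \<open>n = Suc n'\<close> by simp
    then have "Q ?G d (mon3 n' 2 k)" by (simp add: numeral_2_eq_2)
    ultimately show ?thesis using Q_equiv[of "mon3 n 0 (Suc k)" "mon3 n' 2 k" ?G d] by metis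
  qed
qed

lemma surj_b2:
  assumes par: "b = 2" "s = 1" "c \<le> a" "a \<le> d + 1" and deg: "i + j + k = d + 1"
  shows "Q (G a b c s) d (mon3 i j k :: 'a::comm_ring_1 poly3)"
proof -
  have A: "Q (G a b c s) d (mon3 (i + j) 0 k :: 'a poly3)" using surj_b2_aux[OF par, of "i + j" k] deg by simp
  have B: "Q (G a b c s) d (mon3 i (0 + j) k :: 'a poly3) \<longleftrightarrow> Q (G a b c s) d (mon3 (i + j) 0 k :: 'a poly3)"
    using Q_shift[where 'a='a, of i 0 j k d "G a b c s"] deg by simp
  show ?thesis using A B by simp
qed

lemma Q_all:
  assumes mons: "\<And>i j k. i + j + k = d + 1 \<Longrightarrow> Q gs d (mon3 i j k :: 'a::comm_ring_1 poly3)"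
    and hg: "homog (Suc d) g"
  shows "Q gs d g"
proof (induction g rule: poly_induct_keys)
  case 1
  then show ?case by (simp add: Q_I gen_ideal_zero)
next
  case (2 p)
  obtain i j k where p: "p = (i, j, k)" by (cases p) auto
  have "i + j + k = d + 1" using hg 2 unfolding homog_def p tdeg_def by auto
  then have "Q gs d (Poly_Mapping.single 0 (Poly_Mapping.lookup g p) * mon3 i j k)" by (intro Q_scale mons)
  then show ?case by (simp add: mon3_def mult_single p)
next
  case (3 f g)
  then show ?case by (rule Q_add)
qed



theorem corollary3p8:
  fixes a b c \<beta> \<gamma> :: nat
  assumes "c \<le> a" and "2 \<le> c"
    and "1 \<le> \<beta>" and "\<beta> + 1 \<le> b"
    and "1 \<le> \<gamma>" and "b + 1 \<le> a + \<gamma>"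
    and "\<gamma> + 1 \<le> b" and "\<gamma> + 1 \<le> c"
    and "a = 2 \<or> b = 2 \<or> c = 2"
  shows "has_WLP (gen_ideal
           [mon3 a 0 0,
            mon3 0 b 0 - mon3 (b - \<gamma>) 0 \<gamma>,
            mon3 0 0 c,
            mon3 (a - b + \<gamma>) (b - \<beta>) 0,
            mon3 0 (b - \<beta>) (c - \<gamma>)] :: 'k::field_char_0 poly3 set)"
proof -
  have g1: "\<gamma> = 1" using assms by auto
  define s where "s = b - \<beta>"
  have par: "0 < s" "s < b" "b \<le> a" "1 \<le> c" using assms g1 unfolding s_def by auto
  have lst: "[mon3 a 0 0,
            mon3 0 b 0 - mon3 (b - \<gamma>) 0 \<gamma>,
            mon3 0 0 c,
            mon3 (a - b + \<gamma>) (b - \<beta>) 0,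
            mon3 0 (b - \<beta>) (c - \<gamma>)] = (G a b c s :: 'k poly3 list)"
    using g1 by (simp add: G_def s_def)
  show ?thesis unfolding lst has_WLP_def
  proof (intro exI conjI allI)
    show "homog 1 (LL :: 'k poly3)" by (intro homog_add homog_mon3) simp_all
  next
    fix d
    show "mult_inj (gen_ideal (G a b c s)) (LL :: 'k poly3) d \<or> mult_surj (gen_ideal (G a b c s)) (LL :: 'k poly3) d"
    proof (cases "d + b < a + s")
      case True
      then show ?thesis unfolding mult_inj_def using inj_part[OF par True] by blast
    next
      case False
      have mons: "Q (G a b c s) d (mon3 i j k :: 'k poly3)" if deg: "i + j + k = d + 1" for i j k
      proof (cases "c = 2")
        case True
        show ?thesis by (rule surj_c2[OF par(1-3) True _ deg]) (use False in linarith)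
      next
        case c2: False
        then have "b = 2" using assms by auto
        then have "s = 1" using assms unfolding s_def by simp
        show ?thesis
          by (rule surj_b2[OF \<open>b = 2\<close> \<open>s = 1\<close> assms(1) _ deg]) (use False \<open>b = 2\<close> \<open>s = 1\<close> in linarith)
      qed
      have "mult_surj (gen_ideal (G a b c s)) (LL :: 'k poly3) d"
        unfolding mult_surj_def
      proof (intro allI impI)
        fix g :: "'k poly3" assume "homog (Suc d) g"
        then have "Q (G a b c s) d g" using Q_all[of d "G a b c s" g] mons by blast
        then show "\<exists>f. homog d f \<and> g - LL * f \<in> gen_ideal (G a b c s)" unfolding Q_def .
      qed
      then show ?thesis by blast
    qed
  qed
qed

end
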